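(* Let $(Z_N(i))_{0\le i\le N}$ be the breadth-first walk of a Poisson random hypergraph on $N$ vertices with parameters $(\beta_j)_{j\ge2}$, let $C_N(i)$ be the number of children of the $i$th vertex $v(i)$ in the breadth-first ordering, and $P_N(i)$ the number of patches added before the $(i+1)$st deletion. Let $$\lambda_2(N,i)=N\sum_{j=0}^{i}\beta_{j+2}\binom{i}{j}\Big/\binom{N}{j+2},\qquad \rho(N,i)=1-\exp(-\lambda_2(N,i)).$$ Then, for $1\le i\le N$, given $Z_N(i-1)$ and $P_N(i-1)$, the distribution of $C_N(i)$ is $$\mathrm{Bin}\big(N-(i-1)-Z_N(i-1)-P_N(i-1),\ \rho(N,i-1)\big).$$
   Context: Poisson random hypergraph: vertex set $\{1,\dots,N\}$; $(\beta_j)_{j\ge2}$ nonnegative reals, $\beta(t)=\sum_{j\ge2}\beta_jt^j$ with $\beta'(1)<\infty$; for each $A$ with $|A|=j\ge2$, the number of hyperedges on $A$ is Poisson with mean $N\beta_j/\binom{N}{j}$, independently over $A$. A 1-edge is a patch; deleting a patched vertex $v$ removes it and replaces each other hyperedge containing $v$ by the hyperedge on its remaining vertices (2-edges containing $v$ become patches). Breadth-first ordering: put a patch on the lowest-labelled vertex, call it $v(1)$. Having processed $v(1),\dots,v(i-1)$, the children of $v(i)$ are the not-yet-numbered vertices $w$ such that some original hyperedge consists of $v(i)$, $w$ and a subset of $\{v(1),\dots,v(i-1)\}$; they receive the next numbers in order of original label, then $v(i)$ is deleted with collapse; if no numbered-but-undeleted vertex remains, a patch is put on the lowest-labelled un-numbered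 vertex, which becomes the next numbered vertex. Breadth-first walk: $Z_N(0)=0$, $Z_N(i)=Z_N(i-1)+C_N(i)-1$. Patch count: $P_N(0)=1$, $P_N(i)=1-\min_{j\le i}Z_N(j)$ for $i\ge1$. *)

theory Defs
  imports "HOL-Probability.Probability"
begin

definition pois :: "real \<Rightarrow> nat pmf" where
  "pois r = (if r = 0 then return_pmf 0 else poisson_pmf r)"

text \<open>A hypergraph on {1..N} is a multiplicity function H: H A is the number of
  hyperedges on the vertex set A. Possible hyperedge sets: subsets of size >= 2.\<close>
definition hsets :: "nat \<Rightarrow> nat set set" where
  "hsets N = {A. A \<subseteq> {1..N} \<and> card A \<ge> 2}"

definition poisson_hypergraph :: "nat \<Rightarrow> (nat \<Rightarrow> real) \<Rightarrow> (nat set \<Rightarrow> nat) pmf" where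
  "poisson_hypergraph N \<beta> =
     Pi_pmf (hsets N) 0
       (\<lambda>A. pois (real N * \<beta> (card A) / real (N choose card A)))"

text \<open>bf_pre N os i: the numbered list before the i-th deletion (i >= 1), given the
  list os of vertices numbered after i-1 deletions; if no numbered-but-undeleted vertex
  remains, a patch is put on the lowest-labelled un-numbered vertex.\<close>
definition bf_pre :: "nat \<Rightarrow> nat list \<Rightarrow> nat \<Rightarrow> nat list" where
  "bf_pre N os i = (if length os < i then os @ [Min ({1..N} - set os)] else os)"

text \<open>Children of v(i) = os'!(i-1): not-yet-numbered w such that some original hyperedge
  consists of v(i), w and a subset of {v(1),...,v(i-1)}.\<close>
definition bf_children :: "nat \<Rightarrow> (nat set \<Rightarrow> nat) \<Rightarrow> nat list \<Rightarrow> nat \<Rightarrow> nat set" where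
  "bf_children N H os' i =
     {w \<in> {1..N} - set os'. \<exists>S. S \<subseteq> set (take (i - 1) os') \<and>
        H (insert (os' ! (i - 1)) (insert w S)) > 0}"

fun bf_order :: "nat \<Rightarrow> (nat set \<Rightarrow> nat) \<Rightarrow> nat \<Rightarrow> nat list" where
  "bf_order N H 0 = []"
| "bf_order N H (Suc i) =
     (let os' = bf_pre N (bf_order N H i) (Suc i)
      in os' @ sorted_list_of_set (bf_children N H os' (Suc i)))"

definition bf_C :: "nat \<Rightarrow> (nat set \<Rightarrow> nat) \<Rightarrow> nat \<Rightarrow> nat" where
  "bf_C N H i = card (bf_children N H (bf_pre N (bf_order N H (i - 1)) i) i)"

definition bf_Z :: "nat \<Rightarrow> (nat set \<Rightarrow> nat) \<Rightarrow> nat \<Rightarrow> int" where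
  "bf_Z N H i = (\<Sum>k = 1..i. int (bf_C N H k) - 1)"

definition bf_P :: "nat \<Rightarrow> (nat set \<Rightarrow> nat) \<Rightarrow> nat \<Rightarrow> int" where
  "bf_P N H i = (if i = 0 then 1 else 1 - Min ((bf_Z N H) ` {0..i}))"

definition lambda2 :: "(nat \<Rightarrow> real) \<Rightarrow> nat \<Rightarrow> nat \<Rightarrow> real" where
  "lambda2 \<beta> N i = real N * (\<Sum>j = 0..i. \<beta> (j + 2) * real (i choose j) / real (N choose (j + 2)))"

definition rho :: "(nat \<Rightarrow> real) \<Rightarrow> nat \<Rightarrow> nat \<Rightarrow> real" where
  "rho \<beta> N i = 1 - exp (- lambda2 \<beta> N i)"

end

theory Submission
  imports Defs
begin


lemma prob_pair_times:
  "measure_pmf.prob (pair_pmf M N) (A \<times> B) = measure_pmf.prob M A * measure_pmf.prob N B"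
proof -
  have "measure_pmf.prob (pair_pmf M N) (A \<times> B) = measure_pmf.prob (pair_pmf M N) ((A \<times> B) \<inter> set_pmf (pair_pmf M N))"
    by (rule measure_Int_set_pmf[symmetric])
  also have "(A \<times> B) \<inter> set_pmf (pair_pmf M N) = (A \<inter> set_pmf M) \<times> (B \<inter> set_pmf N)" by auto
  also have "measure_pmf.prob (pair_pmf M N) \<dots> = measure_pmf.prob M (A \<inter> set_pmf M) * measure_pmf.prob N (B \<inter> set_pmf N)"
    by (rule measure_pmf_prob_product) auto
  finally show ?thesis by (simp add: measure_Int_set_pmf)
qed

lemma indep_Pi:
  fixes D :: "'a \<Rightarrow> 'b pmf"
  assumes fin: "finite I" and FI: "F \<subseteq> I" and GI: "G \<subseteq> I" and FG: "F \<inter> G = {}"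
    and P: "\<And>H H'. (\<forall>x\<in>F. H x = H' x) \<Longrightarrow> P H = P H'"
    and Q: "\<And>H H'. (\<forall>x\<in>G. H x = H' x) \<Longrightarrow> Q H = Q H'"
  shows "measure_pmf.prob (Pi_pmf I d D) {H. P H \<and> Q H}
       = measure_pmf.prob (Pi_pmf I d D) {H. P H} * measure_pmf.prob (Pi_pmf I d D) {H. Q H}"
proof -
  define h where "h = (\<lambda>(f::'a\<Rightarrow>'b,g::'a\<Rightarrow>'b) x. if x \<in> F then f x else g x)"
  define M where "M = pair_pmf (Pi_pmf F d D) (Pi_pmf (I - F) d D)"
  have "Pi_pmf (F \<union> (I - F)) d D = map_pmf h M"
    unfolding h_def M_def using fin FI
    by (intro Pi_pmf_union) (auto intro: finite_subset)
  moreover have "F \<union> (I - F) = I" using FI by blast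
  ultimately have eq: "Pi_pmf I d D = map_pmf h M" by simp
  have hP: "P (h (f, g)) = P f" for f g by (rule P) (auto simp: h_def)
  have hQ: "Q (h (f, g)) = Q g" for f g by (rule Q) (use FG GI in \<open>auto simp: h_def\<close>)
  have 1: "h -` {H. P H \<and> Q H} = {f. P f} \<times> {g. Q g}" using hP hQ by auto
  have 2: "h -` {H. P H} = {f. P f} \<times> UNIV" using hP by auto
  have 3: "h -` {H. Q H} = UNIV \<times> {g. Q g}" using hQ by auto
  show ?thesis unfolding eq measure_map_pmf 1 2 3 M_def prob_pair_times by simp
qed

lemma prob_all_const:
  assumes "finite I" "E \<subseteq> I"
  shows "measure_pmf.prob (Pi_pmf I d D) {H. \<forall>x\<in>E. H x = c} = (\<Prod>x\<in>E. pmf (D x) c)"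
proof -
  have "{H. \<forall>x\<in>E. H x = c} = Pi I (\<lambda>x. if x \<in> E then {c} else UNIV)" using assms(2) by (auto simp: Pi_def)
  hence "measure_pmf.prob (Pi_pmf I d D) {H. \<forall>x\<in>E. H x = c} = (\<Prod>x\<in>I. measure_pmf.prob (D x) (if x \<in> E then {c} else UNIV))"
    using assms(1) by (simp add: measure_Pi_pmf_Pi)
  also have "\<dots> = (\<Prod>x\<in>I. if x \<in> E then pmf (D x) c else 1)"
    by (intro prod.cong) (auto simp: measure_pmf_single)
  also have "\<dots> = (\<Prod>x\<in>E. pmf (D x) c)"
    using assms by (simp add: prod.If_cases Int_absorb1)
  finally show ?thesis .
qed



lemma binom_rec:
  fixes p :: real
  shows "real (Suc n choose k) * p^k * (1-p)^(Suc n - k) =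
    (if k = 0 then 0 else p * (real (n choose (k-1)) * p^(k-1) * (1-p)^(n-(k-1))))
    + (1-p) * (real (n choose k) * p^k * (1-p)^(n-k))"
proof (cases k)
  case 0 then show ?thesis by simp
next
  case (Suc j)
  show ?thesis
  proof (cases "Suc j \<le> n")
    case True
    have e: "(1-p)^(n-j) = (1-p) * (1-p)^(n - Suc j)"
      using True by (metis Suc_diff_le Suc_le_lessD diff_Suc_Suc power_Suc)
    show ?thesis using True unfolding Suc
      by (simp add: e algebra_simps)
  next
    case False
    hence "n choose Suc j = 0" by simp
    moreover have "n - j = 0" using False by simp
    moreover have "Suc n - Suc j = 0" using False by simp
    ultimately show ?thesis unfolding Suc by (simp add: algebra_simps)
  qed
qed

lemma count_binom:
  fixes D :: "'a \<Rightarrow> 'b pmf" and Ex :: "'w \<Rightarrow> 'a set" and B :: "'w \<Rightarrow> ('a \<Rightarrow> 'b) \<Rightarrow> bool"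
  assumes fin: "finite I" and W: "finite W"
   and sub: "\<And>w. w \<in> W \<Longrightarrow> Ex w \<subseteq> I"
   and disj: "\<And>w w'. w \<in> W \<Longrightarrow> w' \<in> W \<Longrightarrow> w \<noteq> w' \<Longrightarrow> Ex w \<inter> Ex w' = {}"
   and resp: "\<And>w H H'. w \<in> W \<Longrightarrow> (\<forall>x\<in>Ex w. H x = H' x) \<Longrightarrow> B w H = B w H'"
   and pr: "\<And>w. w \<in> W \<Longrightarrow> measure_pmf.prob (Pi_pmf I d D) {H. B w H} = \<rho>"
   and r0: "0 \<le> \<rho>" and r1: "\<rho> \<le> 1"
  shows "measure_pmf.prob (Pi_pmf I d D) {H. card {w\<in>W. B w H} = k} = pmf (binomial_pmf (card W) \<rho>) k"
  using W sub disj resp pr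
proof (induction W arbitrary: k rule: finite_induct)
  case empty
  then show ?case using r0 r1 by (simp add: binomial_pmf_0 indicator_def)
next
  case (insert a W k)
  let ?M = "Pi_pmf I d D"
  let ?c = "\<lambda>H. card {w\<in>W. B w H}"
  have cnt: "card {w\<in>insert a W. B w H} = (if B a H then Suc (?c H) else ?c H)" for H
  proof -
    have "{w\<in>insert a W. B w H} = (if B a H then insert a {w\<in>W. B w H} else {w\<in>W. B w H})" by auto
    thus ?thesis using insert.hyps by auto
  qed
  have IH: "measure_pmf.prob ?M {H. ?c H = j} = pmf (binomial_pmf (card W) \<rho>) j" for j
    by (rule insert.IH) (use insert.prems in auto)
  have respc: "?c H = ?c H'" if "\<forall>x\<in>(\<Union>w\<in>W. Ex w). H x = H' x" for H H'
  proof -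
    have "{w\<in>W. B w H} = {w\<in>W. B w H'}"
      using that insert.prems(3) by (auto intro: Collect_cong) (metis insertI2)+
    thus ?thesis by simp
  qed
  have ind: "measure_pmf.prob ?M {H. P H \<and> R (?c H)} = measure_pmf.prob ?M {H. P H} * measure_pmf.prob ?M {H. R (?c H)}"
    if "\<And>H H'. (\<forall>x\<in>Ex a. H x = H' x) \<Longrightarrow> P H = P H'" for P R
  proof (rule indep_Pi[OF fin])
    show "Ex a \<subseteq> I" using insert.prems by auto
    show "(\<Union>w\<in>W. Ex w) \<subseteq> I" using insert.prems by auto
    show "Ex a \<inter> (\<Union>w\<in>W. Ex w) = {}" using insert.prems(2) insert.hyps by fastforce
    show "\<And>H H'. \<forall>x\<in>Ex a. H x = H' x \<Longrightarrow> P H = P H'" by (rule that)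
    show "\<And>H H'. \<forall>x\<in>\<Union>w\<in>W. Ex w. H x = H' x \<Longrightarrow> R (?c H) = R (?c H')" using respc by metis
  qed
  have ra: "\<And>H H'. (\<forall>x\<in>Ex a. H x = H' x) \<Longrightarrow> B a H = B a H'" using insert.prems(3) by blast
  have ra': "\<And>H H'. (\<forall>x\<in>Ex a. H x = H' x) \<Longrightarrow> (\<not> B a H) = (\<not> B a H')" using ra by blast
  have pa: "measure_pmf.prob ?M {H. B a H} = \<rho>" using insert.prems by auto
  have pna: "measure_pmf.prob ?M {H. \<not> B a H} = 1 - \<rho>"
  proof -
    have "{H. \<not> B a H} = UNIV - {H. B a H}" by auto
    thus ?thesis using pa measure_pmf.prob_compl[of "{H. B a H}" "Pi_pmf I d D"] by simp
  qed
  have split: "{H. card {w\<in>insert a W. B w H} = k} =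
      {H. B a H \<and> (0 < k \<and> ?c H = k - 1)} \<union> {H. \<not> B a H \<and> ?c H = k}"
    unfolding cnt by auto
  have "measure_pmf.prob ?M {H. card {w\<in>insert a W. B w H} = k} =
      measure_pmf.prob ?M {H. B a H \<and> (0 < k \<and> ?c H = k - 1)} + measure_pmf.prob ?M {H. \<not> B a H \<and> ?c H = k}"
    unfolding split by (rule measure_pmf.finite_measure_Union) auto
  also have "\<dots> = \<rho> * measure_pmf.prob ?M {H. 0 < k \<and> ?c H = k - 1} + (1 - \<rho>) * measure_pmf.prob ?M {H. ?c H = k}"
    using ind[OF ra, where R="\<lambda>c. 0 < k \<and> c = k - 1"] ind[OF ra', where R="\<lambda>c. c = k"] pa pna by simp
  also have "\<dots> = (if k = 0 then 0 else \<rho> * pmf (binomial_pmf (card W) \<rho>) (k-1)) + (1 - \<rho>) * pmf (binomial_pmf (card W) \<rho>) k"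
    using IH by (cases k) auto
  also have "\<dots> = pmf (binomial_pmf (card (insert a W)) \<rho>) k"
    using r0 r1 insert.hyps by (simp add: binom_rec[of "card W" k \<rho>])
  finally show ?case .
qed



definition ex :: "nat \<Rightarrow> nat list \<Rightarrow> nat \<Rightarrow> nat set set" where
  "ex N os k = {insert (os ! (k - 1)) (insert w S) | w S. w \<in> {1..N} - set os \<and> S \<subseteq> set (take (k - 1) os)}"

lemma children_resp:
  assumes "\<forall>A\<in>ex N os k. H A = H' A"
  shows "bf_children N H os k = bf_children N H' os k"
proof -
  have *: "H (insert (os ! (k - 1)) (insert w S)) = H' (insert (os ! (k - 1)) (insert w S))"
    if "w \<in> {1..N} - set os" "S \<subseteq> set (take (k - 1) os)" for w S
    using assms that unfolding ex_def by blast
  have "(\<exists>S. S \<subseteq> set (take (k - 1) os) \<and> 0 < H (insert (os ! (k - 1)) (insert w S))) =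
        (\<exists>S. S \<subseteq> set (take (k - 1) os) \<and> 0 < H' (insert (os ! (k - 1)) (insert w S)))"
    if "w \<in> {1..N} - set os" for w
    using *[OF that] by auto
  thus ?thesis unfolding bf_children_def by auto
qed

lemma order_resp:
  "(\<forall>A\<in>(\<Union>k\<in>{1..m}. ex N (bf_pre N (bf_order N H (k - 1)) k) k). H A = H' A)
   \<Longrightarrow> bf_order N H m = bf_order N H' m"
proof (induction m)
  case 0 show ?case by simp
next
  case (Suc m)
  have IH: "bf_order N H m = bf_order N H' m"
    using Suc.prems by (intro Suc.IH) auto
  have "\<forall>A\<in>ex N (bf_pre N (bf_order N H m) (Suc m)) (Suc m). H A = H' A"
  proof -
    have "ex N (bf_pre N (bf_order N H (Suc m - 1)) (Suc m)) (Suc m) \<subseteq>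
       (\<Union>k\<in>{1..Suc m}. ex N (bf_pre N (bf_order N H (k - 1)) k) k)"
      by (intro UN_upper) auto
    thus ?thesis using Suc.prems by auto
  qed
  hence "bf_children N H (bf_pre N (bf_order N H m) (Suc m)) (Suc m) = bf_children N H' (bf_pre N (bf_order N H m) (Suc m)) (Suc m)"
    by (rule children_resp)
  thus ?case using IH by (simp add: Let_def)
qed

lemma pre_ok:
  assumes "distinct os" "set os \<subseteq> {1..N}" "k - 1 \<le> length os" "k \<le> N"
  shows "distinct (bf_pre N os k) \<and> set (bf_pre N os k) \<subseteq> {1..N} \<and> k \<le> length (bf_pre N os k)
         \<and> (\<exists>ys. bf_pre N os k = os @ ys)"
proof (cases "length os < k")
  case True
  have "card (set os) = length os" using assms(1) by (simp add: distinct_card)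
  hence "card (set os) < card {1..N}" using True assms(4) by simp
  hence "{1..N} - set os \<noteq> {}"
  proof (intro notI)
    assume "{1..N} - set os = {}"
    hence "{1..N} \<subseteq> set os" by blast
    hence "card {1..N} \<le> card (set os)" by (intro card_mono) auto
    thus False using \<open>card (set os) < card {1..N}\<close> by simp
  qed
  hence m: "Min ({1..N} - set os) \<in> {1..N} - set os" by (intro Min_in) auto
  show ?thesis using True m assms unfolding bf_pre_def by auto
next
  case False
  then show ?thesis using assms unfolding bf_pre_def by auto
qed

lemma order_inv:
  "k \<le> N \<Longrightarrow> distinct (bf_order N H k) \<and> set (bf_order N H k) \<subseteq> {1..N} \<and> k \<le> length (bf_order N H k)"
proof (induction k)
  case 0 show ?case by simp
next
  case (Suc k)
  let ?os = "bf_pre N (bf_order N H k) (Suc k)"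
  have p: "distinct ?os \<and> set ?os \<subseteq> {1..N} \<and> Suc k \<le> length ?os"
    using pre_ok[of "bf_order N H k" N "Suc k"] Suc by auto
  have c: "bf_children N H ?os (Suc k) \<subseteq> {1..N} - set ?os" unfolding bf_children_def by auto
  hence f: "finite (bf_children N H ?os (Suc k))" by (meson finite_Diff finite_atLeastAtMost finite_subset)
  show ?case using p c f by (auto simp: Let_def)
qed

lemma pre_inv:
  assumes "1 \<le> k" "k \<le> N"
  shows "distinct (bf_pre N (bf_order N H (k - 1)) k) \<and> set (bf_pre N (bf_order N H (k - 1)) k) \<subseteq> {1..N}
     \<and> k \<le> length (bf_pre N (bf_order N H (k - 1)) k)"
  using pre_ok[of "bf_order N H (k - 1)" N k] order_inv[of "k - 1" N H] assms by auto

lemma order_Suc_prefix: "\<exists>ys. bf_order N H (Suc m) = bf_order N H m @ ys"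
  by (auto simp: Let_def bf_pre_def)

lemma order_prefix: "k \<le> m \<Longrightarrow> \<exists>ys. bf_order N H m = bf_order N H k @ ys"
proof (induction m rule: dec_induct)
  case base then show ?case by simp
next
  case (step m)
  then show ?case using order_Suc_prefix[of N H m] by (metis append.assoc)
qed

lemma pre_prefix:
  assumes "1 \<le> k" "k \<le> i"
  shows "\<exists>ys. bf_pre N (bf_order N H (i - 1)) i = bf_pre N (bf_order N H (k - 1)) k @ ys"
proof (cases "k = i")
  case True then show ?thesis by auto
next
  case False
  have a: "\<exists>ys. bf_order N H k = bf_pre N (bf_order N H (k - 1)) k @ ys"
    using assms by (cases k) (auto simp: Let_def)
  have b: "\<exists>ys. bf_order N H (i - 1) = bf_order N H k @ ys"
    using False assms by (intro order_prefix) auto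
  have c: "\<exists>ys. bf_pre N (bf_order N H (i - 1)) i = bf_order N H (i - 1) @ ys"
    by (auto simp: bf_pre_def)
  show ?thesis using a b c by (metis append.assoc)
qed

lemma disj_abstract:
  assumes "distinct os" "i \<le> length os" "1 \<le> k" "k < i"
    and "S \<subseteq> set (take (k - 1) os)" "w' \<notin> set os" "S' \<subseteq> set (take (i - 1) os)"
  shows "insert (os ! (k - 1)) (insert w S) \<noteq> insert (os ! (i - 1)) (insert w' S')"
proof
  assume eq: "insert (os ! (k - 1)) (insert w S) = insert (os ! (i - 1)) (insert w' S')"
  let ?V = "set (take (i - 1) os)"
  have vk: "os ! (k - 1) \<in> ?V" using nth_mem[of "k - 1" "take (i - 1) os"] assms by simp
  have SV: "S \<subseteq> ?V" proof -
    have "k - 1 \<le> i - 1" using assms(4) by simp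
    thus ?thesis using assms(5) set_take_subset_set_take[of "k - 1" "i - 1" os] by blast
  qed
  have il: "i - 1 < length os" using assms(2,3,4) by simp
  have "os ! (i - 1) \<in> set (drop (i - 1) os)"
    using il nth_mem[of 0 "drop (i - 1) os"] by simp
  hence vi: "os ! (i - 1) \<notin> ?V" using set_take_disj_set_drop_if_distinct[OF assms(1), of "i - 1" "i - 1"] by auto
  have vi2: "os ! (i - 1) \<in> set os" using assms(2,3,4) by simp
  have w'V: "w' \<notin> ?V" using assms(6) by (meson in_set_takeD)
  have a: "os ! (i - 1) \<in> insert (os ! (k - 1)) (insert w S)" using eq by blast
  have n1: "os ! (i - 1) \<noteq> os ! (k - 1)" using vk vi by metis
  have n2: "os ! (i - 1) \<notin> S" using vi SV by blast
  have wi: "os ! (i - 1) = w" using a n1 n2 by simp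
  have b: "w' \<in> insert (os ! (k - 1)) (insert w S)" using eq by blast
  have m1: "w' \<noteq> os ! (k - 1)" using vk w'V by metis
  have m2: "w' \<noteq> w" using wi vi2 assms(6) by metis
  have m3: "w' \<notin> S" using w'V SV by blast
  show False using b m1 m2 m3 by simp
qed



lemma Z_0: "bf_Z N H 0 = 0" by (simp add: bf_Z_def)

lemma Z_Suc: "bf_Z N H (Suc k) = bf_Z N H k + int (bf_C N H (Suc k)) - 1"
  by (simp add: bf_Z_def)

lemma P_min: "bf_P N H k = 1 - Min (bf_Z N H ` {0..k})"
  by (simp add: bf_P_def Z_0)

lemma P_Suc: "bf_P N H (Suc k) = max (bf_P N H k) (1 - bf_Z N H (Suc k))"
proof -
  have "bf_Z N H ` {0..Suc k} = insert (bf_Z N H (Suc k)) (bf_Z N H ` {0..k})"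
    by (simp add: atLeast0_atMost_Suc)
  hence "Min (bf_Z N H ` {0..Suc k}) = min (bf_Z N H (Suc k)) (Min (bf_Z N H ` {0..k}))"
    by (simp add: Min_insert)
  thus ?thesis unfolding P_min by linarith
qed

lemma P_ge: "bf_P N H k \<ge> 1 - bf_Z N H k"
proof -
  have "Min (bf_Z N H ` {0..k}) \<le> bf_Z N H k" by (intro Min_le) auto
  thus ?thesis unfolding P_min by linarith
qed

lemma len_order_Suc:
  "length (bf_order N H (Suc k)) = length (bf_pre N (bf_order N H k) (Suc k)) + bf_C N H (Suc k)"
proof -
  let ?os = "bf_pre N (bf_order N H k) (Suc k)"
  have "bf_children N H ?os (Suc k) \<subseteq> {1..N}" unfolding bf_children_def by auto
  hence "finite (bf_children N H ?os (Suc k))" by (rule finite_subset) auto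
  thus ?thesis by (simp add: Let_def bf_C_def)
qed

lemma len_identity:
  "int (length (bf_pre N (bf_order N H k) (Suc k))) = int k + bf_Z N H k + bf_P N H k"
proof (induction k)
  case 0
  then show ?case by (simp add: bf_pre_def Z_0 bf_P_def)
next
  case (Suc k)
  define n where "n = length (bf_order N H (Suc k))"
  have n: "int n = int (Suc k) + bf_Z N H (Suc k) + bf_P N H k"
    using Suc len_order_Suc[of N H k] Z_Suc[of N H k] unfolding n_def by simp
  have pk: "bf_P N H k \<ge> 1 - bf_Z N H k" by (rule P_ge)
  have "bf_Z N H (Suc k) \<ge> bf_Z N H k - 1" using Z_Suc[of N H k] by simp
  hence nn: "bf_Z N H (Suc k) + bf_P N H k \<ge> 0" using pk by linarith
  have l: "length (bf_pre N (bf_order N H (Suc k)) (Suc (Suc k))) = (if n < Suc (Suc k) then Suc n else n)"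
    unfolding n_def bf_pre_def by simp
  show ?case
  proof (cases "n < Suc (Suc k)")
    case True
    hence "bf_Z N H (Suc k) + bf_P N H k = 0" using n nn by linarith
    hence "bf_P N H (Suc k) = bf_P N H k + 1" unfolding P_Suc by linarith
    then show ?thesis using l True n by simp
  next
    case False
    hence "bf_Z N H (Suc k) + bf_P N H k \<ge> 1" using n by linarith
    hence "bf_P N H (Suc k) = bf_P N H k" unfolding P_Suc by linarith
    then show ?thesis using l False n by simp
  qed
qed

lemma finite_hsets: "finite (hsets N)"
proof -
  have "hsets N \<subseteq> Pow {1..N}" unfolding hsets_def by auto
  thus ?thesis by (rule finite_subset) auto
qed

lemma pmf_pois_0: "r \<ge> 0 \<Longrightarrow> pmf (pois r) 0 = exp (- r)"
  by (auto simp: pois_def)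

lemma prob_some_edge:
  assumes beta: "\<And>j. j \<ge> 2 \<Longrightarrow> \<beta> j \<ge> 0" and E: "E \<subseteq> hsets N"
  shows "measure_pmf.prob (poisson_hypergraph N \<beta>) {H. \<exists>A\<in>E. 0 < H A}
       = 1 - exp (- (\<Sum>A\<in>E. real N * \<beta> (card A) / real (N choose card A)))"
proof -
  let ?D = "\<lambda>A. pois (real N * \<beta> (card A) / real (N choose card A))"
  have finE: "finite E" using E finite_hsets by (rule finite_subset)
  have "{H. \<exists>A\<in>E. 0 < H A} = UNIV - {H. \<forall>A\<in>E. H A = (0::nat)}" by auto
  hence "measure_pmf.prob (poisson_hypergraph N \<beta>) {H. \<exists>A\<in>E. 0 < H A}
      = 1 - measure_pmf.prob (poisson_hypergraph N \<beta>) {H. \<forall>A\<in>E. H A = 0}"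
    using measure_pmf.prob_compl[of "{H. \<forall>A\<in>E. H A = (0::nat)}" "poisson_hypergraph N \<beta>"] by simp
  also have "measure_pmf.prob (poisson_hypergraph N \<beta>) {H. \<forall>A\<in>E. H A = 0} = (\<Prod>A\<in>E. pmf (?D A) 0)"
    unfolding poisson_hypergraph_def by (rule prob_all_const[OF finite_hsets E])
  also have "\<dots> = (\<Prod>A\<in>E. exp (- (real N * \<beta> (card A) / real (N choose card A))))"
  proof (intro prod.cong refl pmf_pois_0)
    fix A assume "A \<in> E"
    hence "card A \<ge> 2" using E unfolding hsets_def by auto
    thus "real N * \<beta> (card A) / real (N choose card A) \<ge> 0" using beta by simp
  qed
  also have "\<dots> = exp (- (\<Sum>A\<in>E. real N * \<beta> (card A) / real (N choose card A)))"
    using finE by (simp add: exp_sum[symmetric] sum_negf)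
  finally show ?thesis .
qed

lemma sum_Pow_card:
  fixes g :: "nat \<Rightarrow> real"
  assumes "finite V"
  shows "(\<Sum>S\<in>Pow V. g (card S)) = (\<Sum>j=0..card V. real (card V choose j) * g j)"
proof -
  have "(\<Sum>S\<in>Pow V. g (card S)) = (\<Sum>j\<in>{0..card V}. \<Sum>S\<in>{S\<in>Pow V. card S = j}. g (card S))"
  proof (intro sum.group[symmetric])
    show "finite (Pow V)" "finite {0..card V}" using assms by auto
    show "card ` Pow V \<subseteq> {0..card V}"
    proof
      fix x assume "x \<in> card ` Pow V"
      then obtain S where "S \<subseteq> V" "x = card S" by auto
      thus "x \<in> {0..card V}" using card_mono[OF assms] by auto
    qed
  qed
  also have "\<dots> = (\<Sum>j\<in>{0..card V}. real (card V choose j) * g j)"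
  proof (intro sum.cong refl)
    fix j
    have "(\<Sum>S\<in>{S\<in>Pow V. card S = j}. g (card S)) = (\<Sum>S\<in>{S\<in>Pow V. card S = j}. g j)"
      by (intro sum.cong) auto
    also have "\<dots> = real (card {S\<in>Pow V. card S = j}) * g j" by simp
    also have "card {S\<in>Pow V. card S = j} = card V choose j"
      using n_subsets[OF assms, of j] by (simp add: Pow_def)
    finally show "(\<Sum>S\<in>{S\<in>Pow V. card S = j}. g (card S)) = real (card V choose j) * g j" .
  qed
  finally show ?thesis .
qed

lemma lambda_sum:
  assumes "finite V" "v \<notin> V" "w \<notin> V" "v \<noteq> w" "card V = m"
  shows "(\<Sum>A\<in>(\<lambda>S. insert v (insert w S)) ` Pow V. real N * \<beta> (card A) / real (N choose card A)) = lambda2 \<beta> N m"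
proof -
  have inj: "inj_on (\<lambda>S. insert v (insert w S)) (Pow V)"
  proof (rule inj_onI)
    fix S T assume "S \<in> Pow V" "T \<in> Pow V" "insert v (insert w S) = insert v (insert w T)"
    moreover have "S = insert v (insert w S) - {v, w}" using \<open>S \<in> Pow V\<close> assms(2,3) by auto
    moreover have "T = insert v (insert w T) - {v, w}" using \<open>T \<in> Pow V\<close> assms(2,3) by auto
    ultimately show "S = T" by simp
  qed
  have c: "card (insert v (insert w S)) = card S + 2" if "S \<in> Pow V" for S
  proof -
    have "finite S" "v \<notin> S" "w \<notin> S" using that assms rev_finite_subset by auto
    thus ?thesis using assms(4) by simp
  qed
  have "(\<Sum>A\<in>(\<lambda>S. insert v (insert w S)) ` Pow V. real N * \<beta> (card A) / real (N choose card A))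
     = (\<Sum>S\<in>Pow V. real N * \<beta> (card S + 2) / real (N choose (card S + 2)))"
    by (subst sum.reindex[OF inj]) (auto simp: c intro!: sum.cong)
  also have "\<dots> = (\<Sum>j=0..m. real (m choose j) * (real N * \<beta> (j + 2) / real (N choose (j + 2))))"
    using sum_Pow_card[OF assms(1), of "\<lambda>j. real N * \<beta> (j + 2) / real (N choose (j + 2))"] assms(5) by simp
  also have "\<dots> = lambda2 \<beta> N m"
    unfolding lambda2_def sum_distrib_left by (intro sum.cong refl) (simp add: field_simps)
  finally show ?thesis .
qed



definition trj :: "nat \<Rightarrow> nat \<Rightarrow> (nat set \<Rightarrow> nat) \<Rightarrow> nat list list" where
  "trj N i H = map (bf_order N H) [0..<i]"

definition FFs :: "nat \<Rightarrow> nat \<Rightarrow> (nat set \<Rightarrow> nat) \<Rightarrow> nat set set" where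
  "FFs N i H = (\<Union>k\<in>{1..i-1}. ex N (bf_pre N (bf_order N H (k - 1)) k) k)"

lemma trj_eq_iff: "trj N i H = trj N i H' \<longleftrightarrow> (\<forall>k<i. bf_order N H k = bf_order N H' k)"
  unfolding trj_def by (auto simp: list_eq_iff_nth_eq)

lemma FFs_cong: "trj N i H = trj N i H' \<Longrightarrow> FFs N i H = FFs N i H'"
proof -
  assume "trj N i H = trj N i H'"
  hence o: "\<forall>k<i. bf_order N H k = bf_order N H' k" unfolding trj_eq_iff .
  have "bf_order N H (k - 1) = bf_order N H' (k - 1)" if "k \<in> {1..i-1}" for k
    using o that by auto
  thus ?thesis unfolding FFs_def by (intro SUP_cong refl) simp
qed

lemma tr_resp:
  assumes "\<forall>A\<in>FFs N i H. H A = H' A"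
  shows "trj N i H' = trj N i H"
proof -
  have "bf_order N H k = bf_order N H' k" if "k < i" for k
  proof (rule order_resp)
    have "(\<Union>k'\<in>{1..k}. ex N (bf_pre N (bf_order N H (k' - 1)) k') k') \<subseteq> FFs N i H"
      unfolding FFs_def using that by (intro UN_mono) auto
    thus "\<forall>A\<in>\<Union>k'\<in>{1..k}. ex N (bf_pre N (bf_order N H (k' - 1)) k') k'. H A = H' A"
      using assms by blast
  qed
  thus ?thesis unfolding trj_eq_iff by simp
qed

lemma tr_event_resp:
  assumes "trj N i H0 = t" "\<forall>A\<in>FFs N i H0. H A = H' A"
  shows "(trj N i H = t) = (trj N i H' = t)"
proof
  assume h: "trj N i H = t"
  hence "FFs N i H = FFs N i H0" using assms(1) by (intro FFs_cong) simp
  thus "trj N i H' = t" using tr_resp[of N i H H'] assms(2) h by simp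
next
  assume h: "trj N i H' = t"
  hence "FFs N i H' = FFs N i H0" using assms(1) by (intro FFs_cong) simp
  thus "trj N i H = t" using tr_resp[of N i H' H] assms(2) h by simp
qed

lemma tr_det:
  assumes "trj N i H = trj N i H'"
  shows "bf_Z N H (i - 1) = bf_Z N H' (i - 1) \<and> bf_P N H (i - 1) = bf_P N H' (i - 1)"
proof -
  have o: "bf_order N H k = bf_order N H' k" if "k < i" for k using assms that trj_eq_iff by blast
  have c: "bf_C N H k = bf_C N H' k" if k1: "1 \<le> k" and k2: "k \<le> i - 1" for k
  proof -
    obtain k' where k: "k = Suc k'" using k1 by (cases k) auto
    have "bf_C N H k = length (bf_order N H (Suc k')) - length (bf_pre N (bf_order N H k') (Suc k'))"
      using len_order_Suc[of N H k'] k by simp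
    moreover have "bf_C N H' k = length (bf_order N H' (Suc k')) - length (bf_pre N (bf_order N H' k') (Suc k'))"
      using len_order_Suc[of N H' k'] k by simp
    ultimately show ?thesis using o[of k'] o[of "Suc k'"] k k2 by simp
  qed
  have z: "bf_Z N H j = bf_Z N H' j" if "j \<le> i - 1" for j
    unfolding bf_Z_def using c that by (intro sum.cong) auto
  have "bf_Z N H ` {0..i-1} = bf_Z N H' ` {0..i-1}" using z by (intro image_cong) auto
  thus ?thesis using z unfolding P_min by simp
qed



lemma ins_hsets:
  assumes "a \<in> {1..N}" "b \<in> {1..N}" "a \<noteq> b" "S \<subseteq> {1..N}"
  shows "insert a (insert b S) \<in> hsets N"
proof -
  have f: "finite (insert a (insert b S))" using assms(4) by (meson finite_atLeastAtMost finite_insert finite_subset)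
  have "card {a, b} \<le> card (insert a (insert b S))" using f by (intro card_mono) auto
  thus ?thesis using assms unfolding hsets_def by auto
qed

lemma step_facts:
  assumes "distinct os" "i \<le> length os" "1 \<le> i"
  shows "os ! (i - 1) \<in> set os" "os ! (i - 1) \<notin> set (take (i - 1) os)"
    "card (set (take (i - 1) os)) = i - 1" "set (take (i - 1) os) \<subseteq> set os"
proof -
  have il: "i - 1 < length os" using assms by simp
  show "os ! (i - 1) \<in> set os" using il by simp
  have "os ! (i - 1) \<in> set (drop (i - 1) os)"
    using il nth_mem[of 0 "drop (i - 1) os"] by simp
  thus "os ! (i - 1) \<notin> set (take (i - 1) os)"
    using set_take_disj_set_drop_if_distinct[OF assms(1), of "i - 1" "i - 1"] by auto
  have "distinct (take (i - 1) os)" using assms(1) by simp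
  thus "card (set (take (i - 1) os)) = i - 1" using il by (simp add: distinct_card)
  show "set (take (i - 1) os) \<subseteq> set os" by (rule set_take_subset)
qed

lemma FFs_sub:
  assumes "i \<le> N"
  shows "FFs N i H \<subseteq> hsets N"
proof
  fix X assume "X \<in> FFs N i H"
  then obtain k where k: "k \<in> {1..i-1}" and X: "X \<in> ex N (bf_pre N (bf_order N H (k - 1)) k) k"
    unfolding FFs_def by blast
  define osk where "osk = bf_pre N (bf_order N H (k - 1)) k"
  have kN: "1 \<le> k" "k \<le> N" using k assms by auto
  have pk: "distinct osk" "set osk \<subseteq> {1..N}" "k \<le> length osk"
    using pre_inv[OF kN, of H] unfolding osk_def by auto
  obtain w S where X': "X = insert (osk ! (k - 1)) (insert w S)" "w \<in> {1..N} - set osk" "S \<subseteq> set (take (k - 1) osk)"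
    using X unfolding ex_def osk_def by blast
  have kl: "k - 1 < length osk" using pk kN by linarith
  have v: "osk ! (k - 1) \<in> set osk" using kl by (rule nth_mem)
  have "set (take (k - 1) osk) \<subseteq> set osk" by (rule set_take_subset)
  hence "insert (osk ! (k - 1)) (insert w S) \<in> hsets N"
    using X' v pk by (intro ins_hsets) auto
  thus "X \<in> hsets N" using X'(1) by simp
qed

lemma FFs_disj:
  assumes "1 \<le> i" "i \<le> N"
  shows "FFs N i H \<inter> ex N (bf_pre N (bf_order N H (i - 1)) i) i = {}"
proof (rule ccontr)
  define os where "os = bf_pre N (bf_order N H (i - 1)) i"
  assume "FFs N i H \<inter> ex N (bf_pre N (bf_order N H (i - 1)) i) i \<noteq> {}"
  then obtain X where X1: "X \<in> FFs N i H" and X2: "X \<in> ex N os i" unfolding os_def by blast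
  then obtain k where k: "k \<in> {1..i-1}" and Xk: "X \<in> ex N (bf_pre N (bf_order N H (k - 1)) k) k"
    unfolding FFs_def by blast
  define osk where "osk = bf_pre N (bf_order N H (k - 1)) k"
  have kN: "1 \<le> k" "k \<le> N" "k \<le> i" using k assms by auto
  have pk: "k \<le> length osk" using pre_inv[OF kN(1,2), of H] unfolding osk_def by auto
  have po: "distinct os" "set os \<subseteq> {1..N}" "i \<le> length os" using pre_inv[of i N H] assms unfolding os_def by auto
  obtain ys where ys: "os = osk @ ys" using pre_prefix[OF kN(1,3), of N H] unfolding os_def osk_def by auto
  have kl: "k - 1 < length osk" using pk kN by linarith
  have e1: "osk ! (k - 1) = os ! (k - 1)" using ys kl by (simp add: nth_append)
  have e2: "take (k - 1) osk = take (k - 1) os" using ys pk by simp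
  obtain w S where XA: "X = insert (os ! (k - 1)) (insert w S)" "S \<subseteq> set (take (k - 1) os)"
    using Xk e1 e2 unfolding ex_def osk_def[symmetric] by auto
  obtain w' S' where XB: "X = insert (os ! (i - 1)) (insert w' S')" "w' \<in> {1..N} - set os" "S' \<subseteq> set (take (i - 1) os)"
    using X2 unfolding ex_def by blast
  have "insert (os ! (k - 1)) (insert w S) \<noteq> insert (os ! (i - 1)) (insert w' S')"
    using k XA XB po by (intro disj_abstract) auto
  thus False using XA XB by simp
qed



lemma rho_bounds:
  assumes "\<And>j. j \<ge> 2 \<Longrightarrow> \<beta> j \<ge> 0"
  shows "0 \<le> rho \<beta> N m" "rho \<beta> N m \<le> 1"
proof -
  have "lambda2 \<beta> N m \<ge> 0" unfolding lambda2_def using assms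
    by (intro mult_nonneg_nonneg sum_nonneg divide_nonneg_nonneg) auto
  thus "0 \<le> rho \<beta> N m" "rho \<beta> N m \<le> 1" unfolding rho_def by auto
qed

lemma per_t:
  fixes H0 :: "nat set \<Rightarrow> nat"
  assumes beta: "\<And>j. j \<ge> 2 \<Longrightarrow> \<beta> j \<ge> 0" and i1: "1 \<le> i" and iN: "i \<le> N"
  defines "os \<equiv> bf_pre N (bf_order N H0 (i - 1)) i"
  shows "measure_pmf.prob (poisson_hypergraph N \<beta>)
           {H. trj N i H = trj N i H0 \<and> card (bf_children N H os i) = k}
       = measure_pmf.prob (poisson_hypergraph N \<beta>) {H. trj N i H = trj N i H0}
         * pmf (binomial_pmf (N - length os) (rho \<beta> N (i - 1))) k"
proof -
  let ?D = "\<lambda>A. pois (real N * \<beta> (card A) / real (N choose card A))"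
  define v where "v = os ! (i - 1)"
  define V where "V = set (take (i - 1) os)"
  define W where "W = {1..N} - set os"
  define Ex where "Ex = (\<lambda>w. (\<lambda>S. insert v (insert w S)) ` Pow V)"
  define B where "B = (\<lambda>w (H::nat set \<Rightarrow> nat). \<exists>A\<in>Ex w. 0 < H A)"
  have po: "distinct os" "set os \<subseteq> {1..N}" "i \<le> length os"
    using pre_inv[OF i1 iN, of H0] unfolding os_def by auto
  note sf = step_facts[OF po(1) po(3) i1, folded v_def V_def]
  have vN: "v \<in> {1..N}" using sf po by auto
  have VN: "V \<subseteq> {1..N}" using sf po by auto
  have finV: "finite V" unfolding V_def by simp
  have ExI: "Ex w \<subseteq> hsets N" if "w \<in> W" for w
  proof
    fix A assume "A \<in> Ex w"
    then obtain S where "S \<subseteq> V" "A = insert v (insert w S)" unfolding Ex_def by auto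
    moreover have "v \<noteq> w" using that sf unfolding W_def by auto
    ultimately show "A \<in> hsets N" using vN VN that unfolding W_def by (auto intro!: ins_hsets)
  qed
  have Gex: "ex N os i = (\<Union>w\<in>W. Ex w)"
    unfolding ex_def Ex_def W_def v_def V_def by blast
  have Gsub: "ex N os i \<subseteq> hsets N" using Gex ExI by auto
  have disj: "FFs N i H0 \<inter> ex N os i = {}" using FFs_disj[OF i1 iN, of H0] unfolding os_def .
  have ch: "card (bf_children N H os i) = card {w\<in>W. B w H}" for H
  proof -
    have "bf_children N H os i = {w\<in>W. B w H}"
      unfolding bf_children_def W_def B_def Ex_def v_def V_def by auto
    thus ?thesis by simp
  qed
  have indep: "measure_pmf.prob (poisson_hypergraph N \<beta>)
           {H. trj N i H = trj N i H0 \<and> card (bf_children N H os i) = k}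
       = measure_pmf.prob (poisson_hypergraph N \<beta>) {H. trj N i H = trj N i H0}
         * measure_pmf.prob (poisson_hypergraph N \<beta>) {H. card (bf_children N H os i) = k}"
    unfolding poisson_hypergraph_def
  proof (rule indep_Pi[OF finite_hsets FFs_sub[OF iN] Gsub disj])
    show "\<And>H H'. \<forall>x\<in>FFs N i H0. H x = H' x \<Longrightarrow> (trj N i H = trj N i H0) = (trj N i H' = trj N i H0)"
      by (rule tr_event_resp) simp
    show "\<And>H H'. \<forall>x\<in>ex N os i. H x = H' x \<Longrightarrow> (card (bf_children N H os i) = k) = (card (bf_children N H' os i) = k)"
      using children_resp by metis
  qed
  have cW: "card W = N - length os"
  proof -
    have "card W = card {1..N} - card (set os)" unfolding W_def using po(2) by (intro card_Diff_subset) auto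
    thus ?thesis using po(1) by (simp add: distinct_card)
  qed
  have pr: "measure_pmf.prob (poisson_hypergraph N \<beta>) {H. B w H} = rho \<beta> N (i - 1)" if w: "w \<in> W" for w
  proof -
    have "measure_pmf.prob (poisson_hypergraph N \<beta>) {H. B w H}
        = 1 - exp (- (\<Sum>A\<in>Ex w. real N * \<beta> (card A) / real (N choose card A)))"
      unfolding B_def by (rule prob_some_edge[OF beta ExI[OF w]])
    also have "(\<Sum>A\<in>Ex w. real N * \<beta> (card A) / real (N choose card A)) = lambda2 \<beta> N (i - 1)"
      unfolding Ex_def
    proof (rule lambda_sum[OF finV])
      show "v \<notin> V" using sf by simp
      show "w \<notin> V" using w sf unfolding W_def by auto
      show "v \<noteq> w" using w sf unfolding W_def by auto
      show "card V = i - 1" using sf by simp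
    qed
    finally show ?thesis unfolding rho_def .
  qed
  have bin: "measure_pmf.prob (poisson_hypergraph N \<beta>) {H. card (bf_children N H os i) = k}
      = pmf (binomial_pmf (card W) (rho \<beta> N (i - 1))) k"
    unfolding ch poisson_hypergraph_def
  proof (rule count_binom[OF finite_hsets])
    show "finite W" unfolding W_def by simp
    show "\<And>w. w \<in> W \<Longrightarrow> Ex w \<subseteq> hsets N" by (rule ExI)
    show "\<And>w w'. w \<in> W \<Longrightarrow> w' \<in> W \<Longrightarrow> w \<noteq> w' \<Longrightarrow> Ex w \<inter> Ex w' = {}"
    proof -
      fix w w' assume ww: "w \<in> W" "w' \<in> W" "w \<noteq> w'"
      show "Ex w \<inter> Ex w' = {}"
      proof (rule ccontr)
        assume "Ex w \<inter> Ex w' \<noteq> {}"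
        then obtain S S' where SS: "S \<subseteq> V" "S' \<subseteq> V" "insert v (insert w S) = insert v (insert w' S')"
          unfolding Ex_def by blast
        have "w \<in> insert v (insert w' S')" using SS(3) by blast
        moreover have "w \<noteq> v" "w \<notin> V" using ww sf unfolding W_def by auto
        ultimately show False using ww(3) SS(2) by auto
      qed
    qed
    show "\<And>w H H'. w \<in> W \<Longrightarrow> \<forall>x\<in>Ex w. H x = H' x \<Longrightarrow> B w H = B w H'"
      unfolding B_def by auto
    show "\<And>w. w \<in> W \<Longrightarrow> measure_pmf.prob (Pi_pmf (hsets N) 0 ?D) {H. B w H} = rho \<beta> N (i - 1)"
      using pr unfolding poisson_hypergraph_def by simp
    show "0 \<le> rho \<beta> N (i - 1)" "rho \<beta> N (i - 1) \<le> 1" using rho_bounds[OF beta] by auto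
  qed
  show ?thesis using indep bin cW by simp
qed



lemma total_prob:
  fixes f :: "'a \<Rightarrow> 'b"
  assumes "finite T" "\<And>x. f x \<in> T"
  shows "measure_pmf.prob M X = (\<Sum>t\<in>T. measure_pmf.prob M (X \<inter> {x. f x = t}))"
proof -
  have "X = (\<Union>t\<in>T. X \<inter> {x. f x = t})" using assms(2) by auto
  hence "measure_pmf.prob M X = measure_pmf.prob M (\<Union>t\<in>T. X \<inter> {x. f x = t})" by simp
  also have "\<dots> = (\<Sum>t\<in>T. measure_pmf.prob M (X \<inter> {x. f x = t}))"
    using assms(1) by (intro measure_pmf.finite_measure_finite_Union) (auto simp: disjoint_family_on_def)
  finally show ?thesis .
qed

theorem lemma6p1:
  fixes \<beta> :: "nat \<Rightarrow> real" and N i :: nat and z p :: int and k :: nat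
  assumes "\<And>j. j \<ge> 2 \<Longrightarrow> \<beta> j \<ge> 0"
    and "summable (\<lambda>j. real j * \<beta> j)"
    and "1 \<le> i" and "i \<le> N"
  shows "measure_pmf.prob (poisson_hypergraph N \<beta>)
           {H. bf_Z N H (i - 1) = z \<and> bf_P N H (i - 1) = p \<and> bf_C N H i = k}
       = measure_pmf.prob (poisson_hypergraph N \<beta>)
           {H. bf_Z N H (i - 1) = z \<and> bf_P N H (i - 1) = p}
         * pmf (binomial_pmf (nat (int N - int (i - 1) - z - p)) (rho \<beta> N (i - 1))) k"
proof -
  note beta = assms(1) and i1 = assms(3) and iN = assms(4)
  define M where "M = poisson_hypergraph N \<beta>"
  define Ev where "Ev = {H. bf_Z N H (i - 1) = z \<and> bf_P N H (i - 1) = p}"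
  define Ck where "Ck = {H. bf_Z N H (i - 1) = z \<and> bf_P N H (i - 1) = p \<and> bf_C N H i = k}"
  define b where "b = pmf (binomial_pmf (nat (int N - int (i - 1) - z - p)) (rho \<beta> N (i - 1))) k"
  define L where "L = {xs::nat list. set xs \<subseteq> {1..N} \<and> length xs \<le> N}"
  define T where "T = {ts. set ts \<subseteq> L \<and> length ts \<le> i}"
  have finT: "finite T" unfolding T_def L_def
    by (intro finite_lists_length_le) (auto intro: finite_lists_length_le)
  have trT: "trj N i H \<in> T" for H
  proof -
    have "bf_order N H k \<in> L" if "k < i" for k
    proof -
      have "distinct (bf_order N H k)" "set (bf_order N H k) \<subseteq> {1..N}"
        using order_inv[of k N H] that iN by auto
      moreover from this have "length (bf_order N H k) \<le> N"
      proof -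
        assume a: "distinct (bf_order N H k)" "set (bf_order N H k) \<subseteq> {1..N}"
        have "card (set (bf_order N H k)) \<le> card {1..N}" using a(2) by (intro card_mono) auto
        moreover have "card (set (bf_order N H k)) = length (bf_order N H k)" using a(1) by (rule distinct_card)
        ultimately show ?thesis by simp
      qed
      ultimately show ?thesis unfolding L_def by simp
    qed
    thus ?thesis unfolding T_def trj_def by auto
  qed
  have pt: "measure_pmf.prob M (Ck \<inter> {H. trj N i H = t}) = measure_pmf.prob M (Ev \<inter> {H. trj N i H = t}) * b" for t
  proof (cases "\<exists>H0. trj N i H0 = t \<and> H0 \<in> Ev")
    case True
    then obtain H0 where H0: "trj N i H0 = t" "H0 \<in> Ev" by blast
    define os where "os = bf_pre N (bf_order N H0 (i - 1)) i"
    have det: "H \<in> Ev" if "trj N i H = trj N i H0" for H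
      using tr_det[OF that] H0(2) unfolding Ev_def by simp
    have e1: "Ev \<inter> {H. trj N i H = t} = {H. trj N i H = trj N i H0}"
    proof (intro set_eqI iffI)
      fix H assume "H \<in> Ev \<inter> {H. trj N i H = t}"
      thus "H \<in> {H. trj N i H = trj N i H0}" using H0(1) by simp
    next
      fix H assume "H \<in> {H. trj N i H = trj N i H0}"
      hence a: "trj N i H = trj N i H0" by simp
      show "H \<in> Ev \<inter> {H. trj N i H = t}" using det[OF a] a H0(1) by simp
    qed
    have same: "bf_order N H (i - 1) = bf_order N H0 (i - 1)" if "trj N i H = trj N i H0" for H
      using that i1 unfolding trj_eq_iff by auto
    have cC: "bf_C N H i = card (bf_children N H os i)" if "trj N i H = trj N i H0" for H
      using same[OF that] unfolding bf_C_def os_def by simp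
    have e2: "Ck \<inter> {H. trj N i H = t} = {H. trj N i H = trj N i H0 \<and> card (bf_children N H os i) = k}"
    proof (intro set_eqI iffI)
      fix H assume "H \<in> Ck \<inter> {H. trj N i H = t}"
      hence a: "trj N i H = trj N i H0" "bf_C N H i = k" using H0(1) unfolding Ck_def by auto
      thus "H \<in> {H. trj N i H = trj N i H0 \<and> card (bf_children N H os i) = k}" using cC[OF a(1)] by simp
    next
      fix H assume "H \<in> {H. trj N i H = trj N i H0 \<and> card (bf_children N H os i) = k}"
      hence a: "trj N i H = trj N i H0" "card (bf_children N H os i) = k" by auto
      have "H \<in> Ev" by (rule det[OF a(1)])
      thus "H \<in> Ck \<inter> {H. trj N i H = t}" using a cC[OF a(1)] H0(1) unfolding Ck_def Ev_def by simp
    qed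
    have li: "int (length os) = int (i - 1) + z + p"
      using len_identity[of N H0 "i - 1"] H0(2) i1 unfolding os_def Ev_def by simp
    have nb: "nat (int N - int (i - 1) - z - p) = N - length os" using li by simp
    show ?thesis unfolding e1 e2 M_def b_def nb os_def
      by (rule per_t[OF beta i1 iN])
  next
    case False
    hence "Ev \<inter> {H. trj N i H = t} = {}" "Ck \<inter> {H. trj N i H = t} = {}" unfolding Ev_def Ck_def by auto
    thus ?thesis by simp
  qed
  have "measure_pmf.prob M Ck = (\<Sum>t\<in>T. measure_pmf.prob M (Ck \<inter> {H. trj N i H = t}))"
    by (rule total_prob[OF finT trT])
  also have "\<dots> = (\<Sum>t\<in>T. measure_pmf.prob M (Ev \<inter> {H. trj N i H = t})) * b"
    unfolding pt sum_distrib_right ..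
  also have "(\<Sum>t\<in>T. measure_pmf.prob M (Ev \<inter> {H. trj N i H = t})) = measure_pmf.prob M Ev"
    by (rule total_prob[OF finT trT, symmetric])
  finally show ?thesis unfolding M_def Ck_def Ev_def b_def .
qed

end
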